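(* Let $n\ge2$, let $a_1,\dots,a_n$ be real numbers, $C(t)=\sum_{j=1}^n a_j\cos jt$, $S(t)=\sum_{j=1}^n a_j\sin jt$, and suppose $S(t_1)=0$ with $t_1\in(0,\pi)$. Define $a^{(1)}_1,\dots,a^{(1)}_{n-1}$ by setting $a^{(1)}_n=a^{(1)}_{n+1}=0$ and, for $k=n,n-1,\dots,2$ (in this order), $$a^{(1)}_{k-1}=2a_k+2\cos t_1\, a^{(1)}_k-a^{(1)}_{k+1}.$$ Then $$C(\pi)=-\frac{a^{(1)}_1}{2}-(1+\cos t_1)\sum_{j=1}^{n-1}(-1)^j a^{(1)}_j .$$ *)

theory Defs
  imports "HOL-Analysis.Analysis"
begin

text \<open>Backward recursion: rev_rec n a c m is the coefficient a^(1)_(n+1-m),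
  with a^(1)_(n+1) = a^(1)_n = 0 and
  a^(1)_(k-1) = 2 a_k + 2 c a^(1)_k - a^(1)_(k+1) for k = n, ..., 2.\<close>
fun rev_rec :: "nat \<Rightarrow> (nat \<Rightarrow> real) \<Rightarrow> real \<Rightarrow> nat \<Rightarrow> real" where
  "rev_rec n a c 0 = 0"
| "rev_rec n a c (Suc 0) = 0"
| "rev_rec n a c (Suc (Suc m)) =
     2 * a (n - m) + 2 * c * rev_rec n a c (Suc m) - rev_rec n a c m"

definition a1 :: "nat \<Rightarrow> (nat \<Rightarrow> real) \<Rightarrow> real \<Rightarrow> nat \<Rightarrow> real" where
  "a1 n a t1 j = rev_rec n a (cos t1) (n + 1 - j)"

end

theory Submission
  imports Defs
begin

lemma telesc:
  fixes b f :: "nat \<Rightarrow> real" and c d :: real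
  assumes rs: "\<And>k. f (k+2) + f k = 2*d*f (k+1)"
  shows "(\<Sum>k=1..m. (b (k-1) - 2*c*b k + b (k+1)) * f k) =
     b 0 * f 1 - b m * f (m+1) + b (m+1) * f m - b 1 * f 0 + 2*(d-c)*(\<Sum>k=1..m. b k * f k)"
proof (induction m)
  case 0 then show ?case by simp
next
  case (Suc m)
  have e: "f (Suc (Suc m)) = 2*d*f (Suc m) - f m" using rs[of m] by (simp add: algebra_simps)
  have A: "(\<Sum>k=1..Suc m. G k) = (\<Sum>k=1..m. G k) + G (Suc m)" for G :: "nat \<Rightarrow> real" by simp
  have "(\<Sum>k=1..Suc m. (b (k-1) - 2*c*b k + b (k+1)) * f k) =
     b 0 * f 1 - b m * f (m+1) + b (m+1) * f m - b 1 * f 0 + 2*(d-c)*(\<Sum>k=1..m. b k * f k)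
     + (b m - 2*c*b (m+1) + b (m+2)) * f (m+1)"
    by (simp only: A Suc.IH) simp
  also have "\<dots> = b 0 * f 1 - b (Suc m) * f (Suc m+1) + b (Suc m+1) * f (Suc m) - b 1 * f 0 + 2*(d-c)*((\<Sum>k=1..m. b k * f k) + b (Suc m) * f (Suc m))"
    by (simp add: e algebra_simps)
  also have "\<dots> = b 0 * f 1 - b (Suc m) * f (Suc m+1) + b (Suc m+1) * f (Suc m) - b 1 * f 0 + 2*(d-c)*(\<Sum>k=1..Suc m. b k * f k)"
    by (simp only: A)
  finally show ?case .

qed

lemma a1_rec:
  assumes "2 \<le> k" "k \<le> n"
  shows "a1 n a t1 (k-1) = 2 * a k + 2 * cos t1 * a1 n a t1 k - a1 n a t1 (k+1)"
proof -
  have h1: "n + 1 - (k-1) = Suc (Suc (n-k))" using assms by simp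
  have h2: "n + 1 - k = Suc (n-k)" using assms by simp
  have h3: "n + 1 - (k+1) = n-k" by simp
  have h4: "n - (n-k) = k" using assms by simp
  show ?thesis unfolding a1_def h1 h2 h3 by (simp add: h4)
qed

theorem corollary2:
  fixes n :: nat and a :: "nat \<Rightarrow> real" and t1 :: real
  assumes "n \<ge> 2"
    and "t1 \<in> {0<..<pi}"
    and "(\<Sum>j=1..n. a j * sin (real j * t1)) = 0"
  shows "(\<Sum>j=1..n. a j * cos (real j * pi)) =
     - a1 n a t1 1 / 2 - (1 + cos t1) * (\<Sum>j=1..n-1. (-1) ^ j * a1 n a t1 j)"
proof -
  define c where "c = cos t1"
  define B where "B j = (if j = 0 then 2*a 1 + 2*c*a1 n a t1 1 - a1 n a t1 2 else a1 n a t1 j)" for j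
  have ak: "a k = (B (k-1) - 2*c*B k + B (k+1)) / 2" if "1 \<le> k" "k \<le> n" for k
  proof (cases "k = 1")
    case True then show ?thesis by (simp add: B_def numeral_2_eq_2)
  next
    case False
    then have "2 \<le> k" using that by simp
    from a1_rec[OF this that(2), of a t1] False that show ?thesis
      by (simp add: B_def c_def)
  qed
  have Bn: "B n = 0" "B (n+1) = 0" using assms(1) by (simp_all add: B_def a1_def)
  have sumeq: "(\<Sum>k=1..n. a k * f k) = (\<Sum>k=1..n. (B (k-1) - 2*c*B k + B (k+1)) * f k) / 2" for f
    by (simp add: sum_divide_distrib ak)
  have rs1: "sin (real (k+2) * t1) + sin (real k * t1) = 2*c* sin (real (k+1) * t1)" for k
  proof -
    have "sin (real (k+2) * t1) = sin (real (k+1) * t1 + t1)" by (simp add: algebra_simps)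
    moreover have "sin (real k * t1) = sin (real (k+1) * t1 - t1)" by (simp add: algebra_simps)
    ultimately show ?thesis by (simp add: sin_add sin_diff c_def)
  qed
  have "(\<Sum>k=1..n. a k * sin (real k * t1)) = B 0 * sin t1 / 2"
    using sumeq[of "\<lambda>k. sin (real k * t1)"]
      telesc[of "\<lambda>k. sin (real k * t1)" c B c n] rs1 Bn by simp
  with assms(3) have "B 0 * sin t1 = 0" by simp
  moreover have "sin t1 > 0" using assms(2) by (simp add: sin_gt_zero)
  ultimately have B0: "B 0 = 0" by simp
  have rs2: "(-1::real)^(k+2) + (-1)^k = 2*(-1)*(-1)^(k+1)" for k by simp
  have T: "(\<Sum>k=1..n. (B (k-1) - 2*c*B k + B (k+1)) * (-1)^k) =
     B 0 * (-1) - B 1 + 2*(-1-c)*(\<Sum>k=1..n. B k * (-1)^k)"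
    using telesc[of "\<lambda>k. (-1::real)^k" "-1" B c n] rs2 Bn by simp
  have "(\<Sum>k=1..n. B k * (-1)^k) = (\<Sum>k=1..n-1. B k * (-1)^k)"
  proof -
    have "{1..n} = insert n {1..n-1}" using assms(1) by auto
    then show ?thesis using Bn assms(1) by (simp add: sum.insert)
  qed
  also have "\<dots> = (\<Sum>j=1..n-1. (-1) ^ j * a1 n a t1 j)"
    by (rule sum.cong) (auto simp: B_def)
  finally have S: "(\<Sum>k=1..n. B k * (-1)^k) = (\<Sum>j=1..n-1. (-1) ^ j * a1 n a t1 j)" .
  have "(\<Sum>j=1..n. a j * cos (real j * pi)) = (\<Sum>k=1..n. a k * (-1)^k)" by simp
  also have "\<dots> = (B 0 * (-1) - B 1 + 2*(-1-c)*(\<Sum>k=1..n. B k * (-1)^k)) / 2"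
    using sumeq[of "\<lambda>k. (-1)^k"] T by simp
  also have "\<dots> = - a1 n a t1 1 / 2 - (1 + cos t1) * (\<Sum>j=1..n-1. (-1) ^ j * a1 n a t1 j)"
  proof -
    have B1: "B 1 = a1 n a t1 1" by (simp add: B_def)
    show ?thesis unfolding S B0 B1 c_def by (simp add: field_simps)
  qed
  finally show ?thesis .
qed

end
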